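(* Let $T$ be a complete continuous logic theory, $\mathcal{H}$ an interpretable Hilbert space in $T$, and $p$ a partial type (type-definable set) in $\mathcal{H}$. If the inner product map is strictly definable on $p\times p$, then in any $M\models T$, $\mathcal{P}(p)$ is a discrete metric space in $H(M)$, and hence $p$ is scattered.
   Context: Work in continuous first-order logic for metric structures. An interpretable Hilbert space in $M\models T$ is a real Hilbert space $H(M)$ which is the direct limit, over a directed partial order, of imaginary sorts $(M_j)$ of $M$ with definable transition maps, such that each map $(x,y)\mapsto\langle h_ix,h_jy\rangle$ on $M_i\times M_j$ is definable ($h_j$ direct-limit maps); this yields an interpretable Hilbert space $\mathcal{H}$ in $T$. Direct-limit maps are taken to be isometric embeddings and pieces identified with subsets of $H(M)$. A type-definable set in $\mathcal{H}$ is a type-definable subset of a single piece. The inner product map is strictly definable on $p\times p$ if it takes only finitely many values there. For $M\models T$, $\mathcal{P}(p)$ is the closure in the weak topology of the set of realisations of $p$ in $H(M)$; $p$ is scattered if for $\omega$-saturated $M\models T$, $\mathcal{P}(p)$ is locally compact in the norm topology. *)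

theory Defs
  imports "HOL-Analysis.Analysis"
begin

definition weak_topology :: "'a::real_inner topology" where
  "weak_topology = topology_generated_by
     {(\<lambda>x. inner x y) -` U | y U. open (U :: real set)}"

text \<open>P(S): the weak closure of a set S of vectors (here S plays the role of the
  set of realisations of the partial type p in H(M)).\<close>
definition weak_closure_P :: "'a::real_inner set \<Rightarrow> 'a set" where
  "weak_closure_P S = weak_topology closure_of S"

definition discrete_metric_subset :: "'a::metric_space set \<Rightarrow> bool" where
  "discrete_metric_subset P \<longleftrightarrow> (\<forall>x\<in>P. \<exists>e>0. \<forall>y\<in>P. dist x y < e \<longrightarrow> y = x)"

end

theory Submission
  imports Defs
begin

lemma weak_cont: "continuous_map weak_topology euclideanreal (\<lambda>x::'a::real_inner. inner x y)"
proof -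
  have ts: "topspace (weak_topology::'a topology) = UNIV"
    unfolding weak_topology_def by (auto intro!: exI[of _ "(\<lambda>x. inner x y) -` UNIV"] exI[of _ y])
  show ?thesis
    unfolding continuous_map_def ts
  proof (intro conjI allI impI)
    fix U :: "real set" assume "openin euclideanreal U"
    hence "open U" by simp
    hence "openin (weak_topology::'a topology) ((\<lambda>x. inner x y) -` U)"
      unfolding weak_topology_def by (intro topology_generated_by_Basis) blast
    thus "openin weak_topology {x \<in> UNIV. inner x y \<in> U}" by (simp add: vimage_def)
  qed auto
qed

lemma closure_vals:
  assumes V: "finite V" and h: "\<And>x. x \<in> S \<Longrightarrow> inner x y \<in> V" and x: "x \<in> weak_closure_P S"
  shows "inner (x::'a::real_inner) y \<in> V"
proof -
  have "(\<lambda>x. inner x y) ` (weak_topology closure_of S) \<subseteq> euclideanreal closure_of ((\<lambda>x. inner x y) ` S)"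
    by (rule continuous_map_image_closure_subset[OF weak_cont])
  also have "\<dots> \<subseteq> closure V" using h by (simp add: closure_mono image_subset_iff)
  also have "\<dots> = V" using V by (simp add: finite_imp_closed)
  finally show ?thesis using x unfolding weak_closure_P_def by blast
qed

theorem lemma2p7:
  fixes S :: "'a::{real_inner, complete_space} set"
  assumes strictly_definable: "finite {inner x y | x y. x \<in> S \<and> y \<in> S}"
  shows "discrete_metric_subset (weak_closure_P S)
         \<and> locally_compact_space (subtopology euclidean (weak_closure_P S))"
proof -
  define V where "V = {inner x y | x y. x \<in> S \<and> y \<in> S}"
  define P where "P = weak_closure_P S"
  have fV: "finite V" using assms V_def by simp
  have step1: "inner x y \<in> V" if "x \<in> S" "y \<in> P" for x y
  proof -
    have "inner y x \<in> V"
      using closure_vals[OF fV _ that(2)[unfolded P_def], of x] that(1)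
      unfolding V_def by (auto simp: inner_commute)
    thus ?thesis by (simp add: inner_commute)
  qed
  have PV: "inner x y \<in> V" if "x \<in> P" "y \<in> P" for x y
    using closure_vals[OF fV _ that(1)[unfolded P_def], of y] step1 that(2) by blast
  define F where "F = (\<lambda>(a,b,c). sqrt (a - 2*b + c)) ` (V \<times> V \<times> V)"
  have fF: "finite F" using fV unfolding F_def by simp
  have dF: "dist x y \<in> F" if "x \<in> P" "y \<in> P" for x y
  proof -
    have eq: "dist x y = sqrt (inner x x - 2 * inner x y + inner y y)"
      by (simp add: dist_norm norm_eq_sqrt_inner inner_diff_left inner_diff_right inner_commute)
    have mem: "(inner x x, inner x y, inner y y) \<in> V \<times> V \<times> V" using PV that by auto
    have "dist x y = (\<lambda>(a,b,c). sqrt (a - 2*b + c)) (inner x x, inner x y, inner y y)" using eq by simp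
    thus ?thesis unfolding F_def by (rule image_eqI[OF _ mem])
  qed
  define e where "e = Min (insert 1 {d\<in>F. d > 0})"
  have epos: "e > 0" unfolding e_def using fF by (subst Min_gr_iff) auto
  have disc: "\<forall>y\<in>P. dist x y < e \<longrightarrow> y = x" if "x \<in> P" for x
  proof (intro ballI impI)
    fix y assume y: "y \<in> P" and d: "dist x y < e"
    have "\<not> dist x y > 0"
    proof
      assume "dist x y > 0"
      hence "e \<le> dist x y" unfolding e_def using fF dF[OF that y] by (intro Min_le) auto
      thus False using d by simp
    qed
    thus "y = x" by simp
  qed
  have lc: "locally_compact_space (subtopology euclidean P)"
    unfolding locally_compact_space_def
  proof
    fix x assume "x \<in> topspace (subtopology euclidean P)"
    hence x: "x \<in> P" by simp
    have "{x} = P \<inter> ball x e" using disc[OF x] x epos by (auto simp: dist_commute)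
    hence "openin (subtopology euclidean P) {x}"
      unfolding openin_open by (intro exI[of _ "ball x e"]) simp
    moreover have "compactin (subtopology euclidean P) {x}" using x by (simp add: compactin_sing)
    ultimately show "\<exists>U K. openin (subtopology euclidean P) U \<and> compactin (subtopology euclidean P) K \<and> x \<in> U \<and> U \<subseteq> K"
      by blast
  qed
  show ?thesis unfolding discrete_metric_subset_def P_def[symmetric] using lc disc epos by blast
qed

end
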